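(* Let $\widehat p\in(0,\infty)^C$ be a probability vector ($\sum_c\widehat p_c=1$), $\varepsilon\ge0$ and $\rho\in\mathbb R_+^C$ with $\sum_{c=1}^C\widehat p_c\rho_c\le\varepsilon$. The set \[\mathcal Q=\Big\{q\in\mathbb R_+^C:\sum_{c=1}^Cq_c=1,\ \sum_{c=1}^Cq_c(\log q_c-\log\widehat p_c+\rho_c)\le\varepsilon\Big\}\] is compact and convex, and its support function satisfies, for every $t\in\mathbb R^C$, \[h_{\mathcal Q}(t):=\sup_{q\in\mathcal Q}q^\top t=\inf_{\alpha\in\mathbb R,\ \beta>0}\Big\{\alpha+\beta\varepsilon+\beta\sum_{c=1}^C\widehat p_c\exp\Big(\frac{t_c-\alpha}{\beta}-\rho_c-1\Big)\Big\}.\]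
   Context: The convention $0\log0=0$ is used. *)

theory Defs
  imports "HOL-Analysis.Analysis"
begin

definition kl_term :: "real \<Rightarrow> real \<Rightarrow> real \<Rightarrow> real" where
  "kl_term q p r = (if q = 0 then 0 else q * (ln q - ln p + r))"

definition Qset :: "real^'c \<Rightarrow> real^'c \<Rightarrow> real \<Rightarrow> (real^'c) set" where
  "Qset p rho eps = {q. (\<forall>c. q$c \<ge> 0) \<and> (\<Sum>c\<in>UNIV. q$c) = 1 \<and>
      (\<Sum>c\<in>UNIV. kl_term (q$c) (p$c) (rho$c)) \<le> eps}"

end

theory Submission
  imports Defs "HOL-Real_Asymp.Real_Asymp"
begin

lemma fy:
  fixes q p r s :: real
  assumes "q \<ge> 0" "p > 0"
  shows "q * s \<le> kl_term q p r + p * exp (s - r - 1)"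
proof (cases "q = 0")
  case True
  then show ?thesis using assms by (simp add: kl_term_def)
next
  case False
  then have q: "q > 0" using assms by simp
  define u where "u = s - r - 1 + ln p - ln q"
  have e: "p * exp (s - r - 1) = q * exp u"
    using q assms by (simp add: u_def exp_add exp_diff)
  have "q * (u + 1) \<le> q * exp u"
    using q by (intro mult_left_mono) (auto simp: exp_ge_add_one_self add.commute)
  moreover have "kl_term q p r = q * s - q * (u + 1)"
    using q by (simp add: kl_term_def u_def algebra_simps)
  ultimately show ?thesis using e by linarith
qed

lemma fy_sum:
  fixes q p rho :: "real^'c" and s :: "'c \<Rightarrow> real"
  assumes "\<forall>c. q$c \<ge> 0" "\<forall>c. p$c > 0"
  shows "(\<Sum>c\<in>UNIV. q$c * s c) \<le> (\<Sum>c\<in>UNIV. kl_term (q$c) (p$c) (rho$c))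
     + (\<Sum>c\<in>UNIV. p$c * exp (s c - rho$c - 1))"
proof -
  have "(\<Sum>c\<in>UNIV. q$c * s c) \<le> (\<Sum>c\<in>UNIV. kl_term (q$c) (p$c) (rho$c) + p$c * exp (s c - rho$c - 1))"
    by (intro sum_mono fy) (use assms in auto)
  then show ?thesis by (simp add: sum.distrib)
qed

lemma weak_dual:
  fixes q p rho t :: "real^'c"
  assumes "q \<in> Qset p rho eps" "\<forall>c. p$c > 0" "\<beta> > 0"
  shows "q \<bullet> t \<le> \<alpha> + \<beta> * eps + \<beta> * (\<Sum>c\<in>UNIV. p$c * exp ((t$c - \<alpha>) / \<beta> - rho$c - 1))"
proof -
  have q: "\<forall>c. q$c \<ge> 0" "(\<Sum>c\<in>UNIV. q$c) = 1" "(\<Sum>c\<in>UNIV. kl_term (q$c) (p$c) (rho$c)) \<le> eps"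
    using assms(1) by (auto simp: Qset_def)
  have "(\<Sum>c\<in>UNIV. q$c * ((t$c - \<alpha>) / \<beta>)) = (q \<bullet> t - \<alpha> * (\<Sum>c\<in>UNIV. q$c)) / \<beta>"
    by (simp add: inner_vec_def sum_divide_distrib sum_subtractf sum_distrib_left sum_distrib_right
        algebra_simps diff_divide_distrib)
  also have "\<dots> = (q \<bullet> t - \<alpha>) / \<beta>" using q by simp
  finally have "(q \<bullet> t - \<alpha>) / \<beta> \<le> eps + (\<Sum>c\<in>UNIV. p$c * exp ((t$c - \<alpha>) / \<beta> - rho$c - 1))"
    using fy_sum[OF q(1) assms(2), of "\<lambda>c. (t$c - \<alpha>) / \<beta>" rho] q(3) by linarith
  then have "q \<bullet> t - \<alpha> \<le> \<beta> * (eps + (\<Sum>c\<in>UNIV. p$c * exp ((t$c - \<alpha>) / \<beta> - rho$c - 1)))"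
    using assms(3) by (simp add: divide_le_eq mult.commute)
  then show ?thesis by (simp add: algebra_simps)
qed

lemma gibbs:
  fixes q p rho :: "real^'c"
  assumes "\<forall>c. q$c \<ge> 0" "(\<Sum>c\<in>UNIV. q$c) = 1" "\<forall>c. p$c > 0"
  shows "- ln (\<Sum>c\<in>UNIV. p$c * exp (- rho$c)) \<le> (\<Sum>c\<in>UNIV. kl_term (q$c) (p$c) (rho$c))"
proof -
  define Z where "Z = (\<Sum>c\<in>UNIV. p$c * exp (- rho$c))"
  have Z: "Z > 0" unfolding Z_def using assms(3)
    by (intro sum_pos) auto
  have "(\<Sum>c\<in>UNIV. q$c * (1 - ln Z)) = 1 - ln Z"
    using assms(2) by (simp add: sum_distrib_right[symmetric])
  moreover have "(\<Sum>c\<in>UNIV. p$c * exp ((1 - ln Z) - rho$c - 1)) = (\<Sum>c\<in>UNIV. p$c * exp (- rho$c)) / Z"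
    using Z by (simp add: sum_divide_distrib exp_diff exp_minus field_simps)
  moreover have "\<dots> = 1" using Z by (simp add: Z_def)
  ultimately show ?thesis
    using fy_sum[OF assms(1) assms(3), of "\<lambda>c. 1 - ln Z" rho] by (simp add: Z_def)
qed

lemma kl_cont:
  fixes p r :: real
  assumes "p > 0"
  shows "continuous_on {0..} (\<lambda>x. kl_term x p r)"
proof -
  have "continuous (at x within {0..}) (\<lambda>x. kl_term x p r)" if x: "x \<ge> 0" for x
  proof (cases "x = 0")
    case True
    have l1: "((\<lambda>x::real. x * ln x) \<longlongrightarrow> 0) (at_right 0)" by real_asymp
    have l2: "((\<lambda>x::real. x * (ln p - r)) \<longlongrightarrow> 0) (at_right 0)"
      by (rule tendsto_mult_left_zero) (rule tendsto_ident_at)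
    have "((\<lambda>x::real. x * ln x - x * (ln p - r)) \<longlongrightarrow> 0 - 0) (at_right 0)"
      by (intro tendsto_diff l1 l2)
    then have l3: "((\<lambda>x::real. x * ln x - x * (ln p - r)) \<longlongrightarrow> 0) (at_right 0)" by simp
    have ev: "eventually (\<lambda>x. x * ln x - x * (ln p - r) = kl_term x p r) (at_right (0::real))"
      using eventually_at_right_less[of 0] by eventually_elim (auto simp: kl_term_def algebra_simps)
    have "((\<lambda>x. kl_term x p r) \<longlongrightarrow> 0) (at_right 0)"
      by (rule Lim_transform_eventually[OF l3 ev])
    then show ?thesis using True
      by (simp add: continuous_within at_within_Ici_at_right kl_term_def)
  next
    case False
    then have xp: "x > 0" using x by simp
    have ev: "eventually (\<lambda>y. y * (ln y - ln p + r) = kl_term y p r) (nhds x)"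
      using eventually_nhds_in_open[of "{0<..}" x] xp
      by (auto elim!: eventually_mono simp: kl_term_def)
    have "isCont (\<lambda>y. y * (ln y - ln p + r)) x"
      using xp by (intro continuous_intros) auto
    then have "isCont (\<lambda>y. kl_term y p r) x"
      using isCont_cong[OF ev] by simp
    then show ?thesis by (rule continuous_at_imp_continuous_at_within)
  qed
  then show ?thesis by (simp add: continuous_on_eq_continuous_within)
qed

lemma Q_compact:
  fixes p rho :: "real^'c" and eps :: real
  assumes "\<forall>c. p$c > 0"
  shows "compact (Qset p rho eps)"
proof -
  define S where "S = {q::real^'c. (\<forall>c. 0 \<le> q$c) \<and> (\<Sum>c\<in>UNIV. q$c) = 1}"
  have cS: "closed S" unfolding S_def
    by (intro closed_Collect_conj closed_Collect_all closed_Collect_le closed_Collect_eq continuous_intros)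
  have ck: "continuous_on S (\<lambda>q. \<Sum>c\<in>UNIV. kl_term (q$c) (p$c) (rho$c))"
  proof (intro continuous_on_sum)
    fix c :: 'c
    show "continuous_on S (\<lambda>q. kl_term (q$c) (p$c) (rho$c))"
      by (rule continuous_on_compose2[OF kl_cont[of "p$c" "rho$c"]])
         (use assms in \<open>auto simp: S_def intro: continuous_intros\<close>)
  qed
  have eq: "Qset p rho eps = S \<inter> (\<lambda>q. \<Sum>c\<in>UNIV. kl_term (q$c) (p$c) (rho$c)) -` {..eps}"
    by (auto simp: Qset_def S_def)
  have cl: "closed (Qset p rho eps)"
    unfolding eq by (rule continuous_closed_preimage[OF ck cS]) simp
  have "norm q \<le> 1" if "q \<in> Qset p rho eps" for q
  proof -
    have "norm q \<le> (\<Sum>c\<in>UNIV. \<bar>q$c\<bar>)" by (rule norm_le_l1_cart)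
    also have "\<dots> = (\<Sum>c\<in>UNIV. q$c)" using that by (auto simp: Qset_def intro!: sum.cong)
    also have "\<dots> = 1" using that by (auto simp: Qset_def)
    finally show ?thesis .
  qed
  then have "bounded (Qset p rho eps)" unfolding bounded_iff by blast
  then show ?thesis using cl by (simp add: compact_eq_bounded_closed)
qed

lemma kl_conv:
  fixes a b p r u :: real
  assumes "a \<ge> 0" "b \<ge> 0" "0 \<le> u" "u \<le> 1" "p > 0"
  shows "kl_term (u * a + (1 - u) * b) p r \<le> u * kl_term a p r + (1 - u) * kl_term b p r"
proof -
  define w where "w = u * a + (1 - u) * b"
  have w0: "w \<ge> 0" using assms by (simp add: w_def)
  show ?thesis
  proof (cases "w = 0")
    case True
    have "u = 0 \<and> b = 0 \<or> u = 1 \<and> a = 0 \<or> a = 0 \<and> b = 0"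
    proof (cases "u = 0 \<or> u = 1")
      case True then show ?thesis using \<open>w = 0\<close> by (auto simp: w_def)
    next
      case False
      then have "u > 0" "1 - u > 0" using assms by auto
      then have "u * a = 0 \<and> (1 - u) * b = 0" using \<open>w = 0\<close> assms
        by (smt (verit) mult_nonneg_nonneg w_def)
      then show ?thesis using \<open>u > 0\<close> \<open>1 - u > 0\<close> by auto
    qed
    then show ?thesis using True by (auto simp: kl_term_def w_def)
  next
    case False
    then have wp: "w > 0" using w0 by simp
    define s where "s = ln w - ln p + r + 1"
    have "p * exp (s - r - 1) = w" using wp assms by (simp add: s_def exp_diff)
    then have kw: "kl_term w p r = w * s - p * exp (s - r - 1)"
      using wp by (simp add: kl_term_def s_def algebra_simps)
    have "u * (a * s) \<le> u * (kl_term a p r + p * exp (s - r - 1))"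
      using fy[OF assms(1) assms(5)] assms by (intro mult_left_mono) auto
    moreover have "(1 - u) * (b * s) \<le> (1 - u) * (kl_term b p r + p * exp (s - r - 1))"
      using fy[OF assms(2) assms(5)] assms by (intro mult_left_mono) auto
    ultimately have "w * s \<le> u * kl_term a p r + (1 - u) * kl_term b p r + p * exp (s - r - 1)"
      by (simp add: w_def algebra_simps)
    then show ?thesis using kw by (simp add: w_def)
  qed
qed

lemma Q_convex:
  fixes p rho :: "real^'c" and eps :: real
  assumes "\<forall>c. p$c > 0"
  shows "convex (Qset p rho eps)"
  unfolding convex_def
proof (intro ballI allI impI)
  fix x y :: "real^'c" and u v :: real
  assume x: "x \<in> Qset p rho eps" and y: "y \<in> Qset p rho eps" and u: "0 \<le> u" and v: "0 \<le> v" and uv: "u + v = 1"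
  then have v1: "v = 1 - u" by simp
  have xx: "\<forall>c. x$c \<ge> 0" "(\<Sum>c\<in>UNIV. x$c) = 1" "(\<Sum>c\<in>UNIV. kl_term (x$c) (p$c) (rho$c)) \<le> eps"
    using x by (auto simp: Qset_def)
  have yy: "\<forall>c. y$c \<ge> 0" "(\<Sum>c\<in>UNIV. y$c) = 1" "(\<Sum>c\<in>UNIV. kl_term (y$c) (p$c) (rho$c)) \<le> eps"
    using y by (auto simp: Qset_def)
  have "(\<Sum>c\<in>UNIV. kl_term (u * x$c + (1 - u) * y$c) (p$c) (rho$c))
      \<le> (\<Sum>c\<in>UNIV. u * kl_term (x$c) (p$c) (rho$c) + (1 - u) * kl_term (y$c) (p$c) (rho$c))"
    by (intro sum_mono kl_conv) (use xx yy u v uv assms in auto)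
  also have "\<dots> = u * (\<Sum>c\<in>UNIV. kl_term (x$c) (p$c) (rho$c)) + (1 - u) * (\<Sum>c\<in>UNIV. kl_term (y$c) (p$c) (rho$c))"
    by (simp add: sum.distrib sum_distrib_left)
  also have "\<dots> \<le> u * eps + (1 - u) * eps"
    using xx yy u v uv by (intro add_mono mult_left_mono) auto
  finally have k: "(\<Sum>c\<in>UNIV. kl_term (u * x$c + (1 - u) * y$c) (p$c) (rho$c)) \<le> eps"
    by (simp add: algebra_simps)
  have "(\<Sum>c\<in>UNIV. u * x$c + (1 - u) * y$c) = u * (\<Sum>c\<in>UNIV. x$c) + (1 - u) * (\<Sum>c\<in>UNIV. y$c)"
    by (simp add: sum.distrib sum_distrib_left)
  then have s: "(\<Sum>c\<in>UNIV. u * x$c + (1 - u) * y$c) = 1" using xx yy by simp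
  show "u *\<^sub>R x + v *\<^sub>R y \<in> Qset p rho eps"
    using k s xx yy u v uv by (auto simp: Qset_def v1 intro!: add_nonneg_nonneg)
qed

lemma duality:
  fixes p rho t :: "real^'c" and eps :: real
  assumes p: "\<forall>c. p$c > 0"
    and ps: "(\<Sum>c\<in>UNIV. p$c) = 1"
    and e0: "eps \<ge> 0"
    and r: "\<forall>c. rho$c \<ge> 0"
    and pe: "(\<Sum>c\<in>UNIV. p$c * rho$c) \<le> eps"
  shows "Sup ((\<lambda>q. q \<bullet> t) ` Qset p rho eps) =
       Inf {\<alpha> + \<beta> * eps + \<beta> * (\<Sum>c\<in>UNIV. p$c * exp ((t$c - \<alpha>) / \<beta> - rho$c - 1)) | \<alpha> \<beta>. \<beta> > 0}"
proof -
  define Q where "Q = Qset p rho eps"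
  define S where "S = {\<alpha> + \<beta> * eps + \<beta> * (\<Sum>c\<in>UNIV. p$c * exp ((t$c - \<alpha>) / \<beta> - rho$c - 1)) | \<alpha> \<beta>. \<beta> > 0}"
  define w where "w = (\<lambda>l c. p$c * exp (l * t$c - rho$c))"
  define Z where "Z = (\<lambda>l. \<Sum>c\<in>UNIV. w l c)"
  define qv where "qv = (\<lambda>l. \<chi> c. w l c / Z l)"
  define h where "h = (\<lambda>l. (\<Sum>c\<in>UNIV. w l c * t$c) / Z l)"
  have wpos: "\<And>l c. w l c > 0" using p by (simp add: w_def)
  have Zpos: "\<And>l. Z l > 0" unfolding Z_def using wpos by (intro sum_pos) auto
  have qv_nn: "\<And>l. \<forall>c. qv l $ c \<ge> 0" using wpos Zpos by (simp add: qv_def less_imp_le)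
  have qv_sum: "\<And>l. (\<Sum>c\<in>UNIV. qv l $ c) = 1"
  proof -
    fix l
    have "(\<Sum>c\<in>UNIV. qv l $ c) = Z l / Z l"
      by (simp add: qv_def sum_divide_distrib[symmetric] Z_def)
    then show "(\<Sum>c\<in>UNIV. qv l $ c) = 1" using Zpos[of l] by simp
  qed
  have h_eq: "\<And>l. qv l \<bullet> t = h l"
    by (simp add: qv_def h_def inner_vec_def sum_divide_distrib)
  have qv_kl: "(\<Sum>c\<in>UNIV. kl_term (qv l $ c) (p$c) (rho$c)) = l * h l - ln (Z l)" for l
  proof -
    have pt: "kl_term (qv l $ c) (p$c) (rho$c) = qv l $ c * (l * t$c) - qv l $ c * ln (Z l)" for c
    proof -
      have "qv l $ c > 0" using wpos Zpos by (simp add: qv_def)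
      moreover have "ln (qv l $ c) = ln (p$c) + (l * t$c - rho$c) - ln (Z l)"
        using Zpos[of l] p[rule_format, of c] by (simp add: qv_def w_def ln_div ln_mult)
      ultimately have "ln (qv l $ c) - ln (p$c) + rho$c = l * t$c - ln (Z l)"
        "qv l $ c > 0" by linarith+
      then show ?thesis by (simp add: kl_term_def right_diff_distrib)
    qed
    have "(\<Sum>c\<in>UNIV. kl_term (qv l $ c) (p$c) (rho$c))
        = l * (\<Sum>c\<in>UNIV. qv l $ c * t$c) - ln (Z l) * (\<Sum>c\<in>UNIV. qv l $ c)"
      by (simp add: pt sum_subtractf sum_distrib_left sum_distrib_right algebra_simps)
    also have "\<dots> = l * h l - ln (Z l)"
      using qv_sum h_eq[of l] by (simp add: inner_vec_def)
    finally show ?thesis .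
  qed
  have Z0: "Z 0 = (\<Sum>c\<in>UNIV. p$c * exp (- rho$c))" by (simp add: Z_def w_def)
  have klp: "(\<Sum>c\<in>UNIV. kl_term (p$c) (p$c) (rho$c)) = (\<Sum>c\<in>UNIV. p$c * rho$c)"
    using p by (intro sum.cong) (auto simp: kl_term_def)
  have G0: "- ln (Z 0) \<le> eps"
  proof -
    have "\<forall>c. p$c \<ge> 0" using p less_imp_le by blast
    then have "- ln (\<Sum>c\<in>UNIV. p$c * exp (- rho$c)) \<le> (\<Sum>c\<in>UNIV. kl_term (p$c) (p$c) (rho$c))"
      using gibbs[of p p rho] p ps by blast
    then show ?thesis unfolding Z0 using klp pe by linarith
  qed
  have q0Q: "qv 0 \<in> Q"
    using qv_nn qv_sum qv_kl[of 0] G0 by (simp add: Q_def Qset_def)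
  have Qne: "Q \<noteq> {}" using q0Q by auto
  have wd: "\<And>q \<alpha> \<beta>. q \<in> Q \<Longrightarrow> \<beta> > 0 \<Longrightarrow>
      q \<bullet> t \<le> \<alpha> + \<beta> * eps + \<beta> * (\<Sum>c\<in>UNIV. p$c * exp ((t$c - \<alpha>) / \<beta> - rho$c - 1))"
    unfolding Q_def using weak_dual p by blast
  have bdd: "bdd_above ((\<lambda>q. q \<bullet> t) ` Q)"
    using wd[of _ 1 0] by (auto intro!: bdd_aboveI2)
  define V where "V = Sup ((\<lambda>q. q \<bullet> t) ` Q)"
  have leV: "\<And>q. q \<in> Q \<Longrightarrow> q \<bullet> t \<le> V"
    unfolding V_def using bdd by (intro cSup_upper) auto
  have VleS: "V \<le> x" if xS: "x \<in> S" for x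
  proof -
    obtain \<alpha> \<beta> where x: "x = \<alpha> + \<beta> * eps + \<beta> * (\<Sum>c\<in>UNIV. p$c * exp ((t$c - \<alpha>) / \<beta> - rho$c - 1))"
      and b: "\<beta> > 0" using xS unfolding S_def by blast
    show ?thesis unfolding V_def x using Qne wd[OF _ b] by (intro cSup_least) auto
  qed
  have Sne: "S \<noteq> {}" unfolding S_def by (auto intro!: exI[of _ "1::real"])
  have bddS: "bdd_below S" using VleS by (auto intro!: bdd_belowI)
  have elem: "(eps + ln (Z l)) / l \<in> S" if l: "l > 0" for l
  proof -
    define \<alpha> where "\<alpha> = (ln (Z l) - 1) / l"
    have pt: "p$c * exp ((t$c - \<alpha>) / (1/l) - rho$c - 1) = w l c / Z l" for c
    proof -
      have "(t$c - \<alpha>) / (1/l) - rho$c - 1 = (l * t$c - rho$c) - ln (Z l)"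
        using l by (simp add: \<alpha>_def field_simps)
      then have "exp ((t$c - \<alpha>) / (1/l) - rho$c - 1) = exp (l * t$c - rho$c) / Z l"
        using Zpos[of l] by (simp only:) (simp add: exp_diff)
      then show ?thesis by (simp add: w_def)
    qed
    have "(\<Sum>c\<in>UNIV. p$c * exp ((t$c - \<alpha>) / (1/l) - rho$c - 1)) = 1"
      unfolding pt sum_divide_distrib[symmetric] using Zpos[of l] by (simp add: Z_def)
    then have "(eps + ln (Z l)) / l = \<alpha> + (1/l) * eps + (1/l) * (\<Sum>c\<in>UNIV. p$c * exp ((t$c - \<alpha>) / (1/l) - rho$c - 1))"
      using l by (simp add: \<alpha>_def field_simps)
    then show ?thesis unfolding S_def using l
      by (intro CollectI exI[of _ \<alpha>] exI[of _ "1/l"] conjI) auto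
  qed
  have key: "\<exists>l>0. eps + ln (Z l) \<le> l * (V + \<delta>)" if d: "\<delta> > 0" for \<delta>
  proof (cases "\<forall>c. t$c < V + \<delta>")
    case True
    define m where "m = Max (range (\<lambda>c. t$c))"
    have tm: "t$c \<le> m" for c unfolding m_def by (rule Max_ge) auto
    have "m \<in> range (\<lambda>c. t$c)" unfolding m_def by (rule Max_in) auto
    then have mlt: "m < V + \<delta>" using True by auto
    define dd where "dd = V + \<delta> - m"
    have dd: "dd > 0" using mlt by (simp add: dd_def)
    define l where "l = (eps + ln (Z 0)) / dd + 1"
    have g: "eps + ln (Z 0) \<ge> 0" using G0 by linarith
    have l0: "l > 0" unfolding l_def using g dd by (simp add: add_nonneg_pos)
    have "Z l \<le> (\<Sum>c\<in>UNIV. exp (l * m) * w 0 c)"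
      unfolding Z_def
    proof (intro sum_mono)
      fix c
      have "l * t$c \<le> l * m" using l0 tm[of c] by (intro mult_left_mono) auto
      then have "exp (l * t$c - rho$c) \<le> exp (l * m - rho$c)" by simp
      then have "w l c \<le> p$c * exp (l * m - rho$c)"
        unfolding w_def using p[rule_format, of c] by (intro mult_left_mono) auto
      also have "\<dots> = exp (l * m) * w 0 c" by (simp add: w_def exp_diff exp_minus field_simps)
      finally show "w l c \<le> exp (l * m) * w 0 c" .
    qed
    also have "\<dots> = exp (l * m) * Z 0" by (simp add: Z_def sum_distrib_left)
    finally have "ln (Z l) \<le> ln (exp (l * m) * Z 0)"
      using Zpos by (subst ln_le_cancel_iff) auto
    also have "\<dots> = l * m + ln (Z 0)" using Zpos[of 0] by (simp add: ln_mult)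
    finally have lz: "ln (Z l) \<le> l * m + ln (Z 0)" .
    have "l * dd = eps + ln (Z 0) + dd" unfolding l_def using dd by (simp add: field_simps)
    then have "l * (V + \<delta>) = l * m + eps + ln (Z 0) + dd"
      by (simp add: dd_def algebra_simps)
    then show ?thesis using lz l0 dd by (intro exI[of _ l]) auto
  next
    case False
    then obtain c0 where c0: "t$c0 \<ge> V + \<delta>" by (auto simp: not_less)
    define V2 where "V2 = V + \<delta> / 2"
    define dd where "dd = t$c0 - V2"
    have dd: "dd > 0" using c0 d by (simp add: dd_def V2_def)
    define A where "A = p$c0 * exp (- rho$c0) * dd"
    have A: "A > 0" using dd p by (simp add: A_def)
    define B where "B = (\<Sum>c\<in>UNIV. p$c * \<bar>t$c - V2\<bar>)"
    have B: "B \<ge> 0" unfolding B_def using p by (intro sum_nonneg) (simp add: less_imp_le)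
    define L where "L = B / (A * dd)"
    have L: "L \<ge> 0" using A B dd by (simp add: L_def)
    have each: "w L c * (t$c - V2) \<ge> - (exp (L * V2) * (p$c * \<bar>t$c - V2\<bar>))" for c
    proof (cases "t$c \<ge> V2")
      case True
      then have "w L c * (t$c - V2) \<ge> 0" using wpos[of L c] by simp
      moreover have "exp (L * V2) * (p$c * \<bar>t$c - V2\<bar>) \<ge> 0" using p[rule_format, of c] by simp
      ultimately show ?thesis by linarith
    next
      case False
      have "L * t$c \<le> L * V2" using L False by (intro mult_left_mono) auto
      then have "L * t$c - rho$c \<le> L * V2" using r[rule_format, of c] by linarith
      then have "w L c \<le> p$c * exp (L * V2)"
        unfolding w_def using p[rule_format, of c] by (intro mult_left_mono) auto
      then have "w L c * (V2 - t$c) \<le> p$c * exp (L * V2) * (V2 - t$c)"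
        using False by (intro mult_right_mono) auto
      then show ?thesis using False by (simp add: algebra_simps)
    qed
    have tc0: "w L c0 * (t$c0 - V2) \<ge> exp (L * V2) * (A + B)"
    proof -
      have e1: "L * t$c0 - rho$c0 = L * V2 + (- rho$c0) + L * dd" by (simp add: dd_def algebra_simps)
      have "w L c0 = p$c0 * (exp (L * V2) * exp (- rho$c0) * exp (L * dd))"
        unfolding w_def e1 by (simp only: exp_add)
      moreover have "t$c0 - V2 = dd" by (simp add: dd_def)
      ultimately have "w L c0 * (t$c0 - V2) = exp (L * V2) * A * exp (L * dd)"
        by (simp add: A_def ac_simps)
      moreover have "exp (L * V2) * A * exp (L * dd) \<ge> exp (L * V2) * A * (1 + L * dd)"
        using A by (intro mult_left_mono) (auto simp: exp_ge_add_one_self add.commute)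
      moreover have AB: "A * (L * dd) = B" using A dd by (simp add: L_def)
      moreover have "exp (L * V2) * A * (1 + L * dd) = exp (L * V2) * (A + A * (L * dd))"
        by (simp add: algebra_simps)
      ultimately show ?thesis by simp
    qed
    have "(\<Sum>c\<in>UNIV. w L c * (t$c - V2)) = w L c0 * (t$c0 - V2) + (\<Sum>c\<in>UNIV - {c0}. w L c * (t$c - V2))"
      by (rule sum.remove) auto
    also have "(\<Sum>c\<in>UNIV - {c0}. w L c * (t$c - V2)) \<ge> (\<Sum>c\<in>UNIV - {c0}. - (exp (L * V2) * (p$c * \<bar>t$c - V2\<bar>)))"
      by (intro sum_mono each)
    moreover have "(\<Sum>c\<in>UNIV - {c0}. p$c * \<bar>t$c - V2\<bar>) \<le> B"
      unfolding B_def using p by (intro sum_mono2) (auto simp: less_imp_le)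
    moreover have "(\<Sum>c\<in>UNIV - {c0}. - (exp (L * V2) * (p$c * \<bar>t$c - V2\<bar>)))
        = - (exp (L * V2) * (\<Sum>c\<in>UNIV - {c0}. p$c * \<bar>t$c - V2\<bar>))"
      by (simp add: sum_distrib_left sum_negf)
    ultimately have sge0: "(\<Sum>c\<in>UNIV. w L c * (t$c - V2)) \<ge> exp (L * V2) * (A + B) - exp (L * V2) * B"
      using tc0 by (smt (verit, best) exp_gt_zero mult_left_mono)
    then have sge: "(\<Sum>c\<in>UNIV. w L c * (t$c - V2)) \<ge> 0"
    proof -
      have "exp (L * V2) * (A + B) - exp (L * V2) * B = exp (L * V2) * A" by (simp add: algebra_simps)
      moreover have "exp (L * V2) * A > 0" using A by simp
      ultimately show ?thesis using sge0 by linarith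
    qed
    have "(\<Sum>c\<in>UNIV. w L c * (t$c - V2)) = (\<Sum>c\<in>UNIV. w L c * t$c) - V2 * Z L"
      by (simp add: Z_def algebra_simps sum_subtractf sum_distrib_left)
    then have "(\<Sum>c\<in>UNIV. w L c * t$c) \<ge> V2 * Z L" using sge by linarith
    then have hL: "h L \<ge> V2" unfolding h_def using Zpos[of L] by (simp add: le_divide_eq)
    have h0: "h 0 \<le> V2" using leV[OF q0Q] h_eq[of 0] d by (simp add: V2_def)
    have cont: "continuous_on {0..L} h"
      unfolding h_def Z_def w_def
      using Zpos[unfolded Z_def w_def]
      by (intro continuous_intros) (auto simp: less_imp_neq dual_order.strict_implies_not_eq)
    obtain ls where ls: "0 \<le> ls" "ls \<le> L" "h ls = V2"
      using IVT'[of h 0 V2 L, OF h0 hL L cont] by blast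
    have lt: "eps + ln (Z ls) < ls * V2"
    proof (rule ccontr)
      assume "\<not> eps + ln (Z ls) < ls * V2"
      then have "qv ls \<in> Q"
        using qv_nn qv_sum qv_kl[of ls] ls(3) by (simp add: Q_def Qset_def)
      then have "h ls \<le> V" using leV h_eq by metis
      then show False using ls(3) d by (simp add: V2_def)
    qed
    have "ls \<noteq> 0" using lt G0 by auto
    then have "ls > 0" using ls by simp
    moreover have m: "ls * V2 \<le> ls * (V + \<delta>)" using ls d by (intro mult_left_mono) (auto simp: V2_def)
    ultimately show ?thesis using lt m by (intro exI[of _ ls] conjI) linarith+
  qed
  have "Inf S \<le> V"
  proof (rule field_le_epsilon)
    fix \<delta> :: real assume "\<delta> > 0"
    then obtain l where l: "l > 0" "eps + ln (Z l) \<le> l * (V + \<delta>)" using key by blast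
    have "Inf S \<le> (eps + ln (Z l)) / l" using elem[OF l(1)] bddS by (rule cInf_lower)
    also have "\<dots> \<le> V + \<delta>" using l by (simp add: divide_le_eq mult.commute)
    finally show "Inf S \<le> V + \<delta>" .
  qed
  moreover have "V \<le> Inf S" using Sne VleS by (intro cInf_greatest) auto
  ultimately show ?thesis unfolding V_def S_def Q_def by simp
qed

theorem lemmaB1:
  fixes p rho :: "real^'c" and eps :: real
  assumes "\<forall>c. p$c > 0"
    and "(\<Sum>c\<in>UNIV. p$c) = 1"
    and "eps \<ge> 0"
    and "\<forall>c. rho$c \<ge> 0"
    and "(\<Sum>c\<in>UNIV. p$c * rho$c) \<le> eps"
  shows "compact (Qset p rho eps) \<and> convex (Qset p rho eps) \<and>
    (\<forall>t::real^'c. Sup ((\<lambda>q. q \<bullet> t) ` Qset p rho eps) =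
       Inf {\<alpha> + \<beta> * eps + \<beta> * (\<Sum>c\<in>UNIV. p$c * exp ((t$c - \<alpha>) / \<beta> - rho$c - 1)) | \<alpha> \<beta>. \<beta> > 0})"
  using Q_compact[OF assms(1)] Q_convex[OF assms(1)] duality[OF assms] by blast

end
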